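(* Let $I$ and $\tilde I$ be closed arcs of $\mathbb{T}$ with dyadic endpoints, and let $\xi\colon I\to\tilde I$ be a map onto $\tilde I$ that is linear in the angular coordinate with slope an integer power of $2$. Then $\xi$ belongs to the pseudo-group $\Upsilon_g$, i.e., there exist $m,n\in\mathbb{N}_0$ with $g^m\circ\xi=g^n$ on $I$.
   Context: $\mathbb{T}$ is the unit circle with angular coordinate $\theta\in\mathbb{R}/\mathbb{Z}$ (points $e^{2\pi i\theta}$); dyadic points are those with $\theta=k/2^j$. $g(z)=z^2$ is the doubling map $\theta\mapsto2\theta$ of $\mathbb{T}$. $\Upsilon_g$ denotes the collection of homeomorphisms $\xi\colon I\to\tilde I$ between arcs of $\mathbb{T}$ of the form $\xi=g^{-m}\circ g^n$ for some $m,n\in\mathbb{N}_0$, meaning that $\xi$ is a continuous lift of $g^n|_I$ under $g^m$, i.e., $g^m\circ\xi=g^n$ on $I$; such maps are linear in $\theta$ with slope $2^{n-m}$. *)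

theory Defs
  imports "HOL-Analysis.Analysis"
begin

definition circ :: "real \<Rightarrow> complex" where
  "circ \<theta> = exp (2 * of_real pi * \<i> * of_real \<theta>)"

definition g :: "complex \<Rightarrow> complex" where
  "g z = z ^ 2"

definition dyadic :: "real \<Rightarrow> bool" where
  "dyadic x \<longleftrightarrow> (\<exists>(k::int) (j::nat). x = of_int k / 2 ^ j)"

definition circ_arc :: "real \<Rightarrow> real \<Rightarrow> complex set" where
  "circ_arc a b = circ ` {a..b}"

definition dyadic_closed_arc :: "complex set \<Rightarrow> bool" where
  "dyadic_closed_arc I \<longleftrightarrow>
     (\<exists>a b. dyadic a \<and> dyadic b \<and> a < b \<and> b < a + 1 \<and> I = circ_arc a b)"

end

theory Submission imports Defs begin
lemma circ_eq_iff: "circ x = circ y \<longleftrightarrow> (\<exists>n::int. x = y + of_int n)"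
proof -
  have "circ x = circ y \<longleftrightarrow> (\<exists>n::int. 2 * of_real pi * \<i> * of_real x = 2 * of_real pi * \<i> * of_real y + (of_int (2 * n) * pi) * \<i>)"
    unfolding circ_def by (rule exp_eq)
  also have "\<dots> \<longleftrightarrow> (\<exists>n::int. x = y + of_int n)"
  proof (intro ex_cong1)
    fix n :: int
    have "2 * of_real pi * \<i> * of_real x = 2 * of_real pi * \<i> * of_real y + (of_int (2 * n) * pi) * \<i>
      \<longleftrightarrow> (2 * pi * \<i>) * complex_of_real x = (2 * pi * \<i>) * complex_of_real (y + of_int n)"
      by (simp add: algebra_simps)
    also have "\<dots> \<longleftrightarrow> complex_of_real x = complex_of_real (y + of_int n)"
      by (simp add: pi_neq_zero)
    also have "\<dots> \<longleftrightarrow> x = y + of_int n" by (simp only: of_real_eq_iff)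
    finally show "(2 * of_real pi * \<i> * of_real x = 2 * of_real pi * \<i> * of_real y + (of_int (2 * n) * pi) * \<i>) = (x = y + of_int n)" .
  qed
  finally show ?thesis .
qed
lemma circ_mult: "circ (x + y) = circ x * circ y"
  unfolding circ_def by (simp add: algebra_simps flip: exp_add)
lemma circ_int: "circ (of_int n) = 1"
  using circ_eq_iff[of "of_int n" 0] by (simp add: circ_def)
lemma g_circ: "g (circ x) = circ (2 * x)"
  unfolding g_def circ_def by (simp add: power2_eq_square flip: exp_add) (simp add: algebra_simps)
lemma gpow_circ: "(g ^^ m) (circ x) = circ (2 ^ m * x)"
  by (induction m arbitrary: x) (auto simp: g_circ mult.assoc)
theorem lemma5p2:
  fixes I J :: "complex set" and \<xi> :: "complex \<Rightarrow> complex"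
    and a b c :: real and k :: int
  assumes "dyadic a" and "dyadic b" and "a < b" and "b < a + 1" and "I = circ_arc a b"
    and "dyadic_closed_arc J"
    and lin: "\<forall>t\<in>{a..b}. \<xi> (circ t) = circ (c + 2 powi k * (t - a))"
    and onto: "\<xi> ` I = J"
  shows "\<exists>m n :: nat. \<forall>z\<in>I. (g ^^ m) (\<xi> z) = (g ^^ n) z"
proof -
  obtain a' b' where a': "dyadic a'" and "dyadic b'" and ab': "a' < b'" "b' < a' + 1"
    and J: "J = circ_arc a' b'"
    using assms(6) unfolding dyadic_closed_arc_def by blast
  define P :: real where "P = 2 powi k"
  have Ppos: "P > 0" unfolding P_def by simp
  have lin': "\<xi> (circ t) = circ (c + P * (t - a))" if "t \<in> {a..b}" for t
    using lin that P_def by blast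
  have inJ: "\<exists>v\<in>{a'..b'}. circ x = circ v" if "\<exists>t\<in>{a..b}. circ x = \<xi> (circ t)" for x
  proof -
    from that obtain t where t: "t \<in> {a..b}" "circ x = \<xi> (circ t)" by blast
    have "\<xi> (circ t) \<in> J" using onto t(1) assms(5) unfolding circ_arc_def by blast
    then show ?thesis using t(2) J unfolding circ_arc_def by auto
  qed
  have "\<exists>v\<in>{a'..b'}. circ c = circ v"
    by (rule inJ) (use lin' \<open>a < b\<close> in \<open>auto intro!: bexI[of _ a]\<close>)
  then obtain s n0 where s: "s \<in> {a'..b'}" and n0: "c = s + of_int n0"
    using circ_eq_iff by blast
  have "s = a'"
  proof (rule ccontr)
    assume "s \<noteq> a'"
    with s have sa: "s > a'" by auto
    have "circ a' \<in> J" using J ab' unfolding circ_arc_def by auto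
    then obtain z where z: "z \<in> I" "circ a' = \<xi> z" using onto by blast
    then obtain t where t: "t \<in> {a..b}" "z = circ t" using assms(5) unfolding circ_arc_def by auto
    have "circ a' = circ (s + P * (t - a) + of_int n0)"
      using z t lin' n0 by (simp add: algebra_simps)
    then obtain n1 :: int where n1: "a' = s + P * (t - a) + of_int n0 + of_int n1"
      using circ_eq_iff by blast
    have "P * (t - a) \<ge> 0" using Ppos t by auto
    hence "of_int (n0 + n1) < (0::real)" using n1 sa by simp
    hence "n0 + n1 \<le> -1" by linarith
    hence "a' + 1 \<le> s + P * (t - a)" using n1 by (simp add: of_int_le_iff[symmetric])
    also have "\<dots> \<le> s + P * (b - a)" using Ppos t by (auto intro: mult_left_mono)
    finally have big: "a' + 1 \<le> s + P * (b - a)" .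
    define \<epsilon> where "\<epsilon> = (a' + 1 - b') / 2"
    have ep: "\<epsilon> > 0" "\<epsilon> < a' + 1 - b'" using ab' by (auto simp: \<epsilon>_def)
    define p where "p = a' + 1 - \<epsilon>"
    have ps: "s \<le> p" using s ep by (auto simp: p_def)
    define t' where "t' = a + (p - s) / P"
    have t'1: "a \<le> t'" using ps Ppos by (auto simp: t'_def)
    have "(p - s) / P \<le> b - a"
      using Ppos big ep by (simp add: pos_divide_le_eq p_def mult.commute)
    hence t'2: "t' \<le> b" by (simp add: t'_def)
    have "P * (t' - a) = p - s" using Ppos by (simp add: t'_def)
    hence "\<xi> (circ t') = circ (p + of_int n0)" using lin' t'1 t'2 n0 by (simp add: add.commute)
    also have "\<dots> = circ p" by (simp add: circ_mult circ_int)
    finally have "\<exists>v\<in>{a'..b'}. circ p = circ v"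
      using t'1 t'2 by (intro inJ) (auto intro!: bexI[of _ t'])
    then obtain v n2 where v: "v \<in> {a'..b'}" "p = v + of_int n2" using circ_eq_iff by blast
    have "of_int n2 > (0::real)" "of_int n2 < (1::real)" using v ep by (auto simp: p_def)
    hence "n2 > 0" "n2 < 1" by simp_all
    thus False by simp
  qed
  from a' obtain q :: int and j :: nat where q: "a' = q / 2 ^ j" unfolding dyadic_def by blast
  from assms(1) obtain r :: int and i :: nat where r: "a = r / 2 ^ i" unfolding dyadic_def by blast
  have cq: "c = of_int (q + n0 * 2 ^ j) / 2 ^ j"
    using n0 q \<open>s = a'\<close> by (simp add: field_simps)
  define m :: nat where "m = i + j + nat \<bar>k\<bar>"
  define n :: nat where "n = nat (int m + k)"
  have nm: "int n = int m + k" unfolding n_def m_def by simp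
  have Pm: "2 ^ m * P = 2 ^ n"
  proof -
    have "(2::real) ^ m * P = 2 powi (int m + k)"
      unfolding P_def by (simp add: power_int_add power_int_of_nat)
    also have "\<dots> = 2 powi (int n)" using nm by simp
    also have "\<dots> = 2 ^ n" by (simp add: power_int_of_nat)
    finally show ?thesis .
  qed
  have "j \<le> m" "i \<le> n" using nm by (auto simp: m_def)
  then obtain d e where d: "m = j + d" and e: "n = i + e" by (metis le_Suc_ex)
  have c_int: "2 ^ m * c = of_int ((q + n0 * 2 ^ j) * 2 ^ d)"
    using cq d by (simp add: power_add)
  have a_int: "2 ^ n * a = of_int (r * 2 ^ e)"
    using r e by (simp add: power_add)
  show ?thesis
  proof (intro exI ballI)
    fix z assume "z \<in> I"
    then obtain t where t: "t \<in> {a..b}" "z = circ t" using assms(5) unfolding circ_arc_def by auto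
    have "(g ^^ m) (\<xi> z) = circ (2 ^ m * c + 2 ^ m * P * t - 2 ^ m * P * a)"
      using t lin' by (simp add: gpow_circ algebra_simps)
    also have "\<dots> = circ (2 ^ n * t + of_int ((q + n0 * 2 ^ j) * 2 ^ d - r * 2 ^ e))"
      unfolding Pm by (simp only: c_int a_int of_int_diff) (simp add: algebra_simps)
    also have "\<dots> = (g ^^ n) z" by (simp only: circ_mult circ_int gpow_circ t(2) mult_1_right)
    finally show "(g ^^ m) (\<xi> z) = (g ^^ n) z" .
  qed
qed
end
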